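(* Let $G$ be a graph (simple, connected, locally finite, with edges of arbitrary positive lengths), $\mathcal{L}(G)$ its line graph and $h:\mathcal{L}(G)\to G$ the map defined below. Then for every $x,y\in\mathcal{L}(G)$, $$d_{\mathcal{L}(G)}(x,y)\le d_G(h(x),h(y))+2\,l_{max},\qquad\text{where } l_{max}:=\sup_{e\in E(G)}L(e).$$
   Context: Graphs are regarded as geodesic metric spaces: each edge $e$ of length $L(e)$ is identified with the real interval $[0,L(e)]$, and $d_G$ is the induced shortest-path distance. The line graph $\mathcal{L}(G)$ has a vertex $V_e$ for each edge $e$ of $G$, and an edge $[V_{e_i},V_{e_j}]$ whenever $e_i\neq e_j$ and $e_i\cap e_j\neq\varnothing$, of length $(L(e_i)+L(e_j))/2$. $Pm(e)$ denotes the midpoint of $e\in E(G)$; $Pm_{\mathcal{L}}([V_{e_i},V_{e_j}])$ denotes the point of the edge $[V_{e_i},V_{e_j}]$ at distance $L(e_i)/2$ from $V_{e_i}$. The map $h$ is defined by $h(V_e)=Pm(e)$, $h(Pm_{\mathcal{L}}([V_{e_i},V_{e_j}]))=$ the vertex $e_i\cap e_j$ of $G$, and for $x_0$ in the interior of the segment from $V_e$ to $Pm_{\mathcal{L}}([V_e,V_{e_0}])$, $h(x_0)$ is the point of the half-edge of $e$ from $Pm(e)$ to the vertex $e\cap e_0$ at distance $d(x_0,V_e)$ from $Pm(e)$. *)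

theory Defs
  imports "HOL-Analysis.Analysis"
begin

text \<open>A point of the metric graph is represented by a triple (e, a, t) with e \<in> E, a \<in> e and
0 \<le> t \<le> L e: the point of edge e at distance t from its endpoint a.\<close>

definition simple_graph :: "'a set \<Rightarrow> 'a set set \<Rightarrow> bool" where
  "simple_graph V E \<longleftrightarrow> (\<forall>e\<in>E. e \<subseteq> V \<and> card e = 2)"

definition is_walk :: "'a set set \<Rightarrow> 'a list \<Rightarrow> bool" where
  "is_walk E ws \<longleftrightarrow> ws \<noteq> [] \<and> (\<forall>(a,b)\<in>set (zip ws (tl ws)). {a,b} \<in> E)"

definition walk_len :: "('a set \<Rightarrow> real) \<Rightarrow> 'a list \<Rightarrow> real" where
  "walk_len L ws = sum_list (map (\<lambda>(a,b). L {a,b}) (zip ws (tl ws)))"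

definition graph_connected :: "'a set \<Rightarrow> 'a set set \<Rightarrow> bool" where
  "graph_connected V E \<longleftrightarrow>
     (\<forall>u\<in>V. \<forall>w\<in>V. \<exists>ws. is_walk E ws \<and> hd ws = u \<and> last ws = w)"

definition locally_finite :: "'a set \<Rightarrow> 'a set set \<Rightarrow> bool" where
  "locally_finite V E \<longleftrightarrow> (\<forall>v\<in>V. finite {e\<in>E. v \<in> e})"

definition vdist :: "'a set set \<Rightarrow> ('a set \<Rightarrow> real) \<Rightarrow> 'a \<Rightarrow> 'a \<Rightarrow> real" where
  "vdist E L u w = Inf {walk_len L ws | ws. is_walk E ws \<and> hd ws = u \<and> last ws = w}"

definition mg_points :: "'a set set \<Rightarrow> ('a set \<Rightarrow> real) \<Rightarrow> ('a set \<times> 'a \<times> real) set" where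
  "mg_points E L = {(e, a, t). e \<in> E \<and> a \<in> e \<and> 0 \<le> t \<and> t \<le> L e}"

definition to_end :: "('a set \<Rightarrow> real) \<Rightarrow> ('a set \<times> 'a \<times> real) \<Rightarrow> 'a \<Rightarrow> real" where
  "to_end L p x = (case p of (e, a, t) \<Rightarrow> if x = a then t else L e - t)"

text \<open>Geodesic (shortest-path) distance on the metric graph: either along a common edge,
or leaving the edge of p through an endpoint x, travelling a shortest vertex path to an
endpoint y of the edge of q.\<close>
definition mg_dist :: "'a set set \<Rightarrow> ('a set \<Rightarrow> real) \<Rightarrow>
     ('a set \<times> 'a \<times> real) \<Rightarrow> ('a set \<times> 'a \<times> real) \<Rightarrow> real" where
  "mg_dist E L p q =
     Inf ({\<bar>to_end L p x - to_end L q x\<bar> | x. fst p = fst q \<and> x \<in> fst p}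
        \<union> {to_end L p x + vdist E L x y + to_end L q y | x y. x \<in> fst p \<and> y \<in> fst q})"

definition line_edges :: "'a set set \<Rightarrow> 'a set set set" where
  "line_edges E = {{e1, e2} | e1 e2. e1 \<in> E \<and> e2 \<in> E \<and> e1 \<noteq> e2 \<and> e1 \<inter> e2 \<noteq> {}}"

definition line_len :: "('a set \<Rightarrow> real) \<Rightarrow> 'a set set \<Rightarrow> real" where
  "line_len L f = (\<Sum>e\<in>f. L e) / 2"

definition other_end :: "'b set \<Rightarrow> 'b \<Rightarrow> 'b" where
  "other_end f a = (THE b. b \<in> f \<and> b \<noteq> a)"

text \<open>A point of L(G) is (f, e, t) with f = {e, e0}; it lies at distance t from V_e.
The midpoint Pm_L(f) is at distance L(e)/2 from V_e. If t \<le> L e / 2 the image is the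
point of e at distance t from Pm(e) towards the vertex v = e \<inter> e0, i.e. at distance
L e/2 - t from v; otherwise the point lies at distance (L e + L e0)/2 - t from V_e0 and
its image is the point of e0 at distance t - L e/2 from v.\<close>
definition hmap :: "('a set \<Rightarrow> real) \<Rightarrow> ('a set set \<times> 'a set \<times> real) \<Rightarrow> ('a set \<times> 'a \<times> real)" where
  "hmap L x = (case x of (f, e, t) \<Rightarrow>
     (let e0 = other_end f e; v = (THE v. v \<in> e \<inter> e0)
      in if t \<le> L e / 2 then (e, v, L e / 2 - t) else (e0, v, t - L e / 2)))"

end

theory Submission
  imports Defs
begin

lemma is_walk_Cons2: "is_walk E (u # w # r) \<longleftrightarrow> {u,w} \<in> E \<and> is_walk E (w # r)"
  by (auto simp: is_walk_def)

lemma is_walk_single: "is_walk E [u]"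
  by (simp add: is_walk_def)

lemma walk_len_Cons2: "walk_len L (u # w # r) = L {u,w} + walk_len L (w # r)"
  by (simp add: walk_len_def)

lemma walk_len_single: "walk_len L [u] = 0"
  by (simp add: walk_len_def)

lemma walk_len_nonneg:
  assumes "is_walk E ws" "\<forall>e\<in>E. 0 \<le> L e"
  shows "0 \<le> walk_len L ws"
  unfolding walk_len_def
  using assms unfolding is_walk_def
  by (intro sum_list_nonneg) auto

lemma vdist_le:
  assumes "is_walk E ws" "hd ws = u" "last ws = w" "\<forall>e\<in>E. 0 \<le> L e"
  shows "vdist E L u w \<le> walk_len L ws"
  unfolding vdist_def
proof (rule cInf_lower)
  show "walk_len L ws \<in> {walk_len L ws |ws. is_walk E ws \<and> hd ws = u \<and> last ws = w}"
    using assms by blast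
  show "bdd_below {walk_len L ws |ws. is_walk E ws \<and> hd ws = u \<and> last ws = w}"
    using walk_len_nonneg[OF _ assms(4)] by (intro bdd_belowI[where m=0]) blast
qed

lemma vdist_ge:
  assumes "\<exists>ws. is_walk E ws \<and> hd ws = u \<and> last ws = w"
    "\<And>ws. is_walk E ws \<Longrightarrow> hd ws = u \<Longrightarrow> last ws = w \<Longrightarrow> c \<le> walk_len L ws"
  shows "c \<le> vdist E L u w"
  unfolding vdist_def
  using assms by (intro cInf_greatest) blast+

lemma line_edge_mem: "a \<in> E \<Longrightarrow> b \<in> E \<Longrightarrow> a \<noteq> b \<Longrightarrow> a \<inter> b \<noteq> {} \<Longrightarrow> {a,b} \<in> line_edges E"
  unfolding line_edges_def
  by (rule CollectI, intro exI[of _ a] exI[of _ b]) simp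

lemma line_len_pair: "a \<noteq> b \<Longrightarrow> line_len L {a,b} = (L a + L b) / 2"
  unfolding line_len_def by simp

lemma line_len_nonneg:
  assumes "\<forall>e\<in>E. L e > 0"
  shows "\<forall>f\<in>line_edges E. 0 \<le> line_len L f"
proof
  fix f assume "f \<in> line_edges E"
  then obtain e1 e2 where f: "f = {e1,e2}" "e1 \<in> E" "e2 \<in> E" "e1 \<noteq> e2"
    unfolding line_edges_def by blast
  have "0 < L e1" "0 < L e2" using assms f by auto
  then show "0 \<le> line_len L f" using f by (simp add: line_len_pair)
qed

lemma line_walk:
  fixes L :: "'a set \<Rightarrow> real"
  assumes pos: "\<forall>e\<in>E. L e > 0"
  shows "is_walk E ws \<Longrightarrow> a \<in> E \<Longrightarrow> hd ws \<in> a \<Longrightarrow> b \<in> E \<Longrightarrow> last ws \<in> b \<Longrightarrow>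
    \<exists>lws. is_walk (line_edges E) lws \<and> hd lws = a \<and> last lws = b \<and>
      walk_len (line_len L) lws \<le> walk_len L ws + (L a + L b) / 2"
proof (induction ws arbitrary: a)
  case Nil
  then show ?case by (simp add: is_walk_def)
next
  case (Cons u rest)
  show ?case
  proof (cases rest)
    case Nil
    show ?thesis
    proof (cases "a = b")
      case True
      then show ?thesis using Cons.prems pos Nil
        by (intro exI[where x="[a]"]) (auto simp: is_walk_single walk_len_single intro: less_imp_le)
    next
      case False
      have "{a,b} \<in> line_edges E" using Cons.prems Nil False by (intro line_edge_mem) auto
      then show ?thesis using Cons.prems pos Nil False
        by (intro exI[where x="[a,b]"])
          (auto simp: is_walk_Cons2 is_walk_single walk_len_Cons2 walk_len_single line_len_pair)
    qed
  next
    case (Cons w r)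
    let ?g = "{u,w}"
    have g: "?g \<in> E" "is_walk E (w # r)" using Cons.prems Cons by (auto simp: is_walk_Cons2)
    obtain lws where lws: "is_walk (line_edges E) lws" "hd lws = ?g" "last lws = b"
      "walk_len (line_len L) lws \<le> walk_len L (w # r) + (L ?g + L b) / 2"
      using Cons.IH[of ?g] g Cons.prems Cons by auto
    have wl: "walk_len L (u # rest) = L ?g + walk_len L (w # r)"
      using Cons by (simp add: walk_len_Cons2)
    have Lpos: "L ?g > 0" "L a > 0" using pos g Cons.prems by auto
    show ?thesis
    proof (cases "a = ?g")
      case True
      then show ?thesis using lws wl Lpos by (intro exI[where x=lws]) auto
    next
      case False
      have ne: "lws \<noteq> []" using lws(1) by (simp add: is_walk_def)
      then obtain l1 lr where lcons: "lws = l1 # lr" by (cases lws) auto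
      have "{a, ?g} \<in> line_edges E" using False Cons.prems g by (intro line_edge_mem) auto
      moreover have "hd (a # lws) = a" "last (a # lws) = b" using lws ne by auto
      moreover have "walk_len (line_len L) (a # lws) = (L a + L ?g)/2 + walk_len (line_len L) lws"
        using lcons lws(2) False by (simp add: walk_len_Cons2 line_len_pair)
      moreover have "is_walk (line_edges E) (a # lws)"
        using lws lcons calculation(1) by (auto simp: is_walk_Cons2)
      moreover have "walk_len (line_len L) (a # lws) \<le> walk_len L (u # rest) + (L a + L b) / 2"
        using calculation(4) lws(4) wl by argo
      ultimately show ?thesis by blast
    qed
  qed
qed

lemma line_point:
  assumes "x \<in> mg_points (line_edges E) (line_len L)"
  obtains f e e0 t where "x = (f, e, t)" "f = {e, e0}" "e \<in> E" "e0 \<in> E" "e \<noteq> e0"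
    "0 \<le> t" "t \<le> (L e + L e0) / 2" "other_end f e = e0"
proof -
  obtain f e t where x: "x = (f,e,t)" "f \<in> line_edges E" "e \<in> f" "0 \<le> t" "t \<le> line_len L f"
    using assms unfolding mg_points_def by blast
  obtain e1 e2 where f: "f = {e1,e2}" "e1 \<in> E" "e2 \<in> E" "e1 \<noteq> e2"
    using x(2) unfolding line_edges_def by blast
  obtain e0 where e0: "f = {e, e0}" "e \<in> E" "e0 \<in> E" "e \<noteq> e0"
  proof (cases "e = e1")
    case True
    then show ?thesis using that[of e2] f by simp
  next
    case False
    then have "e = e2" using f x(3) by simp
    then show ?thesis using that[of e1] f by (simp add: insert_commute)
  qed
  have oe: "other_end f e = e0"
    unfolding other_end_def e0(1) using e0(4) by (intro the_equality) auto
  have "line_len L f = (L e + L e0) / 2" using e0 by (simp add: line_len_pair)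
  then have "t \<le> (L e + L e0) / 2" using x(5) by simp
  then show ?thesis by (rule that[OF x(1) e0 x(4) _ oe])
qed

lemma hmap_prop:
  assumes "x \<in> mg_points (line_edges E) (line_len L)"
  obtains X v s where "X \<in> fst x" "X \<in> E" "hmap L x = (X, v, s)" "0 \<le> s" "s \<le> L X"
    "0 \<le> to_end (line_len L) x X" "to_end (line_len L) x X \<le> L X / 2"
proof -
  obtain f e e0 t where x: "x = (f, e, t)" "f = {e, e0}" "e \<in> E" "e0 \<in> E" "e \<noteq> e0"
    "0 \<le> t" "t \<le> (L e + L e0) / 2" "other_end f e = e0"
    by (rule line_point[OF assms])
  have ll: "line_len L f = (L e + L e0) / 2" using x(2,5) by (simp add: line_len_pair)
  define v where "v = (THE v. v \<in> e \<inter> e0)"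
  have hm: "hmap L x = (if t \<le> L e / 2 then (e, v, L e / 2 - t) else (e0, v, t - L e / 2))"
    unfolding hmap_def v_def x(1) using x(8) by (simp only: prod.case Let_def)
  show ?thesis
  proof (cases "t \<le> L e / 2")
    case True
    have h: "hmap L x = (e, v, L e / 2 - t)" using hm True by simp
    have te: "to_end (line_len L) x e = t" using x(1) by (simp add: to_end_def)
    have "e \<in> fst x" using x(1,2) by simp
    moreover have "0 \<le> L e / 2 - t" "L e / 2 - t \<le> L e" using True x(6) by auto
    ultimately show ?thesis using that[OF _ x(3) h] te x(6) True by simp
  next
    case False
    have h: "hmap L x = (e0, v, t - L e / 2)" using hm False by simp
    have te: "to_end (line_len L) x e0 = (L e + L e0) / 2 - t"
      using x(1,5) ll by (simp add: to_end_def)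
    have "e0 \<in> fst x" using x(1,2) by simp
    moreover have "0 \<le> t - L e / 2" "t - L e / 2 \<le> L e0" using False x(7) by auto
    moreover have "0 \<le> (L e + L e0) / 2 - t" "(L e + L e0) / 2 - t \<le> L e0 / 2"
      using False x(7) by argo+
    ultimately show ?thesis using that[OF _ x(4) h] te by simp
  qed
qed

lemma to_end_nonneg: "0 \<le> s \<Longrightarrow> s \<le> L X \<Longrightarrow> 0 \<le> to_end L (X, v, s) z"
  by (simp add: to_end_def)

lemma to_end_line_nonneg:
  assumes "x \<in> mg_points E L" shows "0 \<le> to_end L x z"
  using assms by (auto simp: mg_points_def to_end_def)

lemma edge_nonempty:
  assumes "simple_graph V E" "X \<in> E" obtains u where "u \<in> X" "u \<in> V"
proof -
  have "card X = 2" "X \<subseteq> V" using assms unfolding simple_graph_def by auto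
  then have "X \<noteq> {}" by auto
  then show ?thesis using that \<open>X \<subseteq> V\<close> by blast
qed

lemma line_conn:
  fixes L :: "'a set \<Rightarrow> real"
  assumes "simple_graph V E" "graph_connected V E" "\<forall>e\<in>E. L e > 0" "X \<in> E" "Y \<in> E"
  shows "\<exists>lws. is_walk (line_edges E) lws \<and> hd lws = X \<and> last lws = Y"
proof -
  obtain u where u: "u \<in> X" "u \<in> V" using edge_nonempty[OF assms(1,4)] by blast
  obtain w where w: "w \<in> Y" "w \<in> V" using edge_nonempty[OF assms(1,5)] by blast
  obtain ws where "is_walk E ws" "hd ws = u" "last ws = w"
    using assms(2) u w unfolding graph_connected_def by blast
  then show ?thesis using line_walk[OF assms(3), of ws X Y] u w assms by blast
qed

lemma main_real:
  assumes sg: "simple_graph V E" and con: "graph_connected V E"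
    and pos: "\<forall>e\<in>E. L e > 0"
    and xm: "x \<in> mg_points (line_edges E) (line_len L)"
    and ym: "y \<in> mg_points (line_edges E) (line_len L)"
    and M: "\<forall>e\<in>E. L e \<le> M"
  shows "mg_dist (line_edges E) (line_len L) x y \<le> mg_dist E L (hmap L x) (hmap L y) + 2 * M"
proof -
  let ?E = "line_edges E" and ?L = "line_len L"
  have lpos: "\<forall>f\<in>?E. 0 \<le> ?L f" using line_len_nonneg[OF pos] .
  have Lnn: "\<forall>e\<in>E. 0 \<le> L e" using pos by (auto intro: less_imp_le)
  obtain X vx sx where hx: "X \<in> fst x" "X \<in> E" "hmap L x = (X, vx, sx)" "0 \<le> sx" "sx \<le> L X"
    "0 \<le> to_end ?L x X" "to_end ?L x X \<le> L X / 2"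
    using hmap_prop[OF xm] by blast
  obtain Y vy sy where hy: "Y \<in> fst y" "Y \<in> E" "hmap L y = (Y, vy, sy)" "0 \<le> sy" "sy \<le> L Y"
    "0 \<le> to_end ?L y Y" "to_end ?L y Y \<le> L Y / 2"
    using hmap_prop[OF ym] by blast
  have fstsub: "fst x \<subseteq> E" "fst y \<subseteq> E"
    using xm ym unfolding mg_points_def line_edges_def by auto
  have vdnn: "0 \<le> vdist ?E ?L X' Y'" if "X' \<in> E" "Y' \<in> E" for X' Y'
    using line_conn[OF sg con pos that] walk_len_nonneg[OF _ lpos]
    by (intro vdist_ge) auto
  have step1: "mg_dist ?E ?L x y \<le> to_end ?L x X + vdist ?E ?L X Y + to_end ?L y Y"
    unfolding mg_dist_def
  proof (rule cInf_lower)
    show "to_end ?L x X + vdist ?E ?L X Y + to_end ?L y Y \<in>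
      {\<bar>to_end ?L x z - to_end ?L y z\<bar> |z. fst x = fst y \<and> z \<in> fst x} \<union>
      {to_end ?L x z + vdist ?E ?L z w + to_end ?L y w |z w. z \<in> fst x \<and> w \<in> fst y}"
      using hx hy by blast
    show "bdd_below ({\<bar>to_end ?L x z - to_end ?L y z\<bar> |z. fst x = fst y \<and> z \<in> fst x} \<union>
      {to_end ?L x z + vdist ?E ?L z w + to_end ?L y w |z w. z \<in> fst x \<and> w \<in> fst y})"
    proof (intro bdd_belowI[where m=0])
      fix r assume "r \<in> {\<bar>to_end ?L x z - to_end ?L y z\<bar> |z. fst x = fst y \<and> z \<in> fst x} \<union>
      {to_end ?L x z + vdist ?E ?L z w + to_end ?L y w |z w. z \<in> fst x \<and> w \<in> fst y}"
      then show "0 \<le> r"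
      proof
        assume "r \<in> {\<bar>to_end ?L x z - to_end ?L y z\<bar> |z. fst x = fst y \<and> z \<in> fst x}"
        then show ?thesis by auto
      next
        assume "r \<in> {to_end ?L x z + vdist ?E ?L z w + to_end ?L y w |z w. z \<in> fst x \<and> w \<in> fst y}"
        then obtain z w where r: "r = to_end ?L x z + vdist ?E ?L z w + to_end ?L y w"
          "z \<in> fst x" "w \<in> fst y" by blast
        have "0 \<le> vdist ?E ?L z w" using vdnn r fstsub by blast
        then show ?thesis using r to_end_line_nonneg[OF xm, of z] to_end_line_nonneg[OF ym, of w]
          by linarith
      qed
    qed
  qed
  let ?hx = "hmap L x" and ?hy = "hmap L y"
  have XX: "vdist ?E ?L X X \<le> 0"
    using vdist_le[of ?E "[X]" X X ?L] lpos by (simp add: is_walk_single walk_len_single)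
  have key: "vdist ?E ?L X Y - (L X + L Y) / 2 \<le> vdist E L u w" if uw: "u \<in> X" "w \<in> Y" for u w
  proof (rule vdist_ge)
    have "u \<in> V" "w \<in> V" using sg hx hy uw unfolding simple_graph_def by auto
    then show "\<exists>ws. is_walk E ws \<and> hd ws = u \<and> last ws = w"
      using con unfolding graph_connected_def by blast
    fix ws assume ws: "is_walk E ws" "hd ws = u" "last ws = w"
    obtain lws where "is_walk ?E lws" "hd lws = X" "last lws = Y"
      "walk_len ?L lws \<le> walk_len L ws + (L X + L Y) / 2"
      using line_walk[OF pos ws(1) hx(2) _ hy(2)] ws uw by auto
    then show "vdist ?E ?L X Y - (L X + L Y) / 2 \<le> walk_len L ws"
      using vdist_le[of ?E lws X Y ?L] lpos by fastforce
  qed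
  have MX: "L X \<le> M" "L Y \<le> M" using M hx hy by auto
  have step2: "mg_dist ?E ?L x y - 2 * M \<le> mg_dist E L ?hx ?hy"
    unfolding mg_dist_def[of E L]
  proof (rule cInf_greatest)
    obtain u where "u \<in> X" using edge_nonempty[OF sg hx(2)] by blast
    obtain w where "w \<in> Y" using edge_nonempty[OF sg hy(2)] by blast
    show "{\<bar>to_end L ?hx z - to_end L ?hy z\<bar> |z. fst ?hx = fst ?hy \<and> z \<in> fst ?hx} \<union>
      {to_end L ?hx z + vdist E L z w + to_end L ?hy w |z w. z \<in> fst ?hx \<and> w \<in> fst ?hy} \<noteq> {}"
      using hx hy \<open>u \<in> X\<close> \<open>w \<in> Y\<close> by auto
    fix r assume "r \<in> {\<bar>to_end L ?hx z - to_end L ?hy z\<bar> |z. fst ?hx = fst ?hy \<and> z \<in> fst ?hx} \<union>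
      {to_end L ?hx z + vdist E L z w + to_end L ?hy w |z w. z \<in> fst ?hx \<and> w \<in> fst ?hy}"
    then show "mg_dist ?E ?L x y - 2 * M \<le> r"
    proof
      assume "r \<in> {\<bar>to_end L ?hx z - to_end L ?hy z\<bar> |z. fst ?hx = fst ?hy \<and> z \<in> fst ?hx}"
      then have "X = Y" "0 \<le> r" using hx hy by auto
      then show ?thesis using step1 XX hx hy MX by auto
    next
      assume "r \<in> {to_end L ?hx z + vdist E L z w + to_end L ?hy w |z w. z \<in> fst ?hx \<and> w \<in> fst ?hy}"
      then obtain u w where r: "r = to_end L ?hx u + vdist E L u w + to_end L ?hy w" "u \<in> X" "w \<in> Y"
        using hx hy by auto
      have "0 \<le> to_end L ?hx u" "0 \<le> to_end L ?hy w"
        using hx hy by (auto intro: to_end_nonneg)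
      then show ?thesis using r(1) key[OF r(2,3)] step1 hx(7) hy(7) MX by argo
    qed
  qed
  then show ?thesis by argo
qed

theorem mainTheorem2:
  fixes V :: "'v set" and E :: "'v set set" and L :: "'v set \<Rightarrow> real"
    and x y :: "'v set set \<times> 'v set \<times> real"
  assumes "simple_graph V E"
    and "graph_connected V E"
    and "locally_finite V E"
    and "\<forall>e\<in>E. L e > 0"
    and "x \<in> mg_points (line_edges E) (line_len L)"
    and "y \<in> mg_points (line_edges E) (line_len L)"
  shows "ereal (mg_dist (line_edges E) (line_len L) x y)
           \<le> ereal (mg_dist E L (hmap L x) (hmap L y)) + 2 * (SUP e\<in>E. ereal (L e))"
proof -
  obtain X :: "'v set" where hx: "X \<in> E" using hmap_prop[OF assms(5)] by blast
  define S where "S = (SUP e\<in>E. ereal (L e))"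
  have le: "ereal (L e) \<le> S" if "e \<in> E" for e unfolding S_def using that by (rule SUP_upper)
  show ?thesis
  proof (cases S)
    case (real M)
    have MM: "\<forall>e\<in>E. L e \<le> M" using le real by auto
    have SM: "(SUP e\<in>E. ereal (L e)) = ereal M" using real unfolding S_def .
    have "ereal (mg_dist (line_edges E) (line_len L) x y)
       \<le> ereal (mg_dist E L (hmap L x) (hmap L y) + 2 * M)"
      using main_real[OF assms(1,2,4,5,6) MM] by (simp only: ereal_less_eq)
    also have "\<dots> = ereal (mg_dist E L (hmap L x) (hmap L y)) + 2 * ereal M"
      by (metis plus_ereal.simps(1) times_ereal.simps(1) numeral_eq_ereal)
    finally show ?thesis unfolding SM .
  next
    case PInf
    then have SM: "(SUP e\<in>E. ereal (L e)) = \<infinity>" unfolding S_def .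
    show ?thesis unfolding SM by simp
  next
    case MInf
    then show ?thesis using le[OF hx] by simp
  qed
qed

end
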